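(* Let $S$ take values in a sample space $\mathcal{S}$ with distribution $F$ having density $f$ with respect to a reference measure $\mu$, and let $\omega\sim G$, independent of $S$, where $G$ has density $g$ with respect to Lebesgue measure on $\mathbb{R}^p$. Let $\lambda>0$ and let $\ell(\beta;s)$ be convex in $\beta\in\mathbb{R}^p$ and continuously twice differentiable in $\beta$, with gradient $\gamma(s,\beta)=\partial_\beta\ell(\beta;s)$. Let $\hat\beta=\hat\beta(S,\omega)$ be the (assumed unique) minimizer of $\ell(\beta;S)+\lambda\|\beta\|_1-\omega^T\beta$ and let $\hat z=\lambda^{-1}(\omega-\gamma(S,\hat\beta))$, so that $\hat z\in\partial\|\hat\beta\|_1$ and $\omega=\gamma(S,\hat\beta)+\lambda\hat z$. Fix $E\subseteq\{1,\dots,p\}$ and let $$\mathcal{B}=\{(\beta,z):\ \beta_{-E}=0,\ \mathrm{sign}(\beta_E)=z_E,\ \|z_{-E}\|_\infty<1\}.$$ Define the reconstruction map $\psi(s,\beta,z)=(s,\gamma(s,\beta)+\lambda z)$. Then, conditionally on the event $\{(\hat\beta,\hat z)\in\mathcal{B}\}$ (assumed to have positive probability), the law of $(S,\hat\beta,\hat z)$ is that of $(S,\hat\beta,\hat z)$ subject to $(\hat\beta,\hat z)\in\mathcal{B}$ and $(S,\gamma(S,\hat\beta)+\lambda\hat z)\sim F\times G$; concretely, parametrizing $(\beta,z)\in\mathcal{B}$ by $(\beta_E,z_{-E})$ (with $\beta=(\beta_E,0)$ and $z=(\mathrm{sign}(\beta_E),z_{-E})$), the random vector $(S,\hat\beta_E,\hat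 z_{-E})$ has density with respect to $\mu(ds)\otimes\mathrm{Leb}$ proportional to $$f(s)\cdot g\big(\gamma(s,\beta)+\lambda z\big)\cdot J\psi(s,\beta,z)\cdot 1_{\mathcal{B}}(\beta,z),$$ where $J\psi(s,\beta,z)$ is the determinant of the derivative of $\psi(s,\cdot,\cdot)$ with respect to the free coordinates $(\beta_E,z_{-E})$ on the fiber over $s$.
   Context: For $v\in\mathbb{R}^p$ and $E\subseteq\{1,\dots,p\}$, $v_E$ and $v_{-E}$ denote the subvectors indexed by $E$ and its complement; $\mathrm{sign}$ is applied coordinatewise. $\partial\|\beta\|_1$ is the subdifferential of the $\ell_1$ norm. $(S,\omega)\sim F\times G$ means $S\sim F$ and $\omega\sim G$ independently. *)

theory Defs
  imports "HOL-Probability.Probability"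
begin

definition lasso_obj ::
  "('a \<Rightarrow> real^'p \<Rightarrow> real) \<Rightarrow> real \<Rightarrow> 'a \<Rightarrow> real^'p \<Rightarrow> real^'p \<Rightarrow> real" where
  "lasso_obj ell lam s w b = ell s b + lam * (\<Sum>i\<in>UNIV. \<bar>b $ i\<bar>) - w \<bullet> b"

definition is_minimizer ::
  "('a \<Rightarrow> real^'p \<Rightarrow> real) \<Rightarrow> real \<Rightarrow> 'a \<Rightarrow> real^'p \<Rightarrow> real^'p \<Rightarrow> bool" where
  "is_minimizer ell lam s w b \<longleftrightarrow> (\<forall>c. lasso_obj ell lam s w b \<le> lasso_obj ell lam s w c)"

definition beta_hat ::
  "('a \<Rightarrow> real^'p \<Rightarrow> real) \<Rightarrow> real \<Rightarrow> 'a \<Rightarrow> real^'p \<Rightarrow> real^'p" where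
  "beta_hat ell lam s w = (THE b. is_minimizer ell lam s w b)"

definition z_hat ::
  "('a \<Rightarrow> real^'p \<Rightarrow> real) \<Rightarrow> ('a \<Rightarrow> real^'p \<Rightarrow> real^'p) \<Rightarrow> real \<Rightarrow> 'a \<Rightarrow> real^'p \<Rightarrow> real^'p" where
  "z_hat ell gam lam s w = (1 / lam) *\<^sub>R (w - gam s (beta_hat ell lam s w))"

definition Bset :: "'p set \<Rightarrow> ((real^'p) \<times> (real^'p)) set" where
  "Bset E = {(b, z). (\<forall>i. i \<notin> E \<longrightarrow> b $ i = 0) \<and> (\<forall>i\<in>E. sgn (b $ i) = z $ i)
                     \<and> (\<forall>i. i \<notin> E \<longrightarrow> \<bar>z $ i\<bar> < 1)}"

text \<open>Parametrization of B by the free coordinates (beta_E, z_{-E}), packed into a single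
  vector u in R^p: u_i = beta_i for i in E, u_i = z_i for i not in E.\<close>
definition beta_of :: "'p set \<Rightarrow> real^'p \<Rightarrow> real^'p" where
  "beta_of E u = (\<chi> i. if i \<in> E then u $ i else 0)"

definition z_of :: "'p set \<Rightarrow> real^'p \<Rightarrow> real^'p" where
  "z_of E u = (\<chi> i. if i \<in> E then sgn (u $ i) else u $ i)"

definition free_coords :: "'p set \<Rightarrow> real^'p \<Rightarrow> real^'p \<Rightarrow> real^'p" where
  "free_coords E b z = (\<chi> i. if i \<in> E then b $ i else z $ i)"

text \<open>Jacobian J psi(s,beta,z): determinant of the derivative of
  (beta_E, z_{-E}) \<mapsto> gamma(s,beta) + lam z  (with z_E = sign(beta_E) locally constant),
  where H s beta is the derivative of gamma(s, .) at beta.\<close>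
definition jac_psi ::
  "('a \<Rightarrow> real^'p \<Rightarrow> real^'p \<Rightarrow> real^'p) \<Rightarrow> real \<Rightarrow> 'p set \<Rightarrow> 'a \<Rightarrow> real^'p \<Rightarrow> real" where
  "jac_psi H lam E s b = det (matrix (\<lambda>v. H s b (\<chi> i. if i \<in> E then v $ i else 0)
                                   + lam *\<^sub>R (\<chi> i. if i \<in> E then 0 else v $ i)))"

definition cond_law :: "'b measure \<Rightarrow> 'b set \<Rightarrow> 'c measure \<Rightarrow> ('b \<Rightarrow> 'c) \<Rightarrow> 'c measure" where
  "cond_law P A N X = distr (density P (\<lambda>x. indicator A x / emeasure P A)) N X"

end

theory Submission
  imports Defs
begin

lemma det_reindex:
  fixes A :: "real^'n::finite^'n" and r :: "'m::finite \<Rightarrow> 'n"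
  assumes r: "bij r"
  shows "det ((\<chi> i j. A $ r i $ r j) :: real^'m^'m) = det A"
proof -
  have sgn: "sign (r \<circ> q \<circ> inv r) = sign q" if "q permutes (UNIV::'m set)" for q
  proof -
    have "map_permutation UNIV r q = r \<circ> q \<circ> inv r"
      unfolding map_permutation_def using r by (auto simp: bij_def restrict_id_def fun_eq_iff)
    moreover have "sign (map_permutation UNIV r q) = sign q"
      by (rule sign_map_permutation) (use r that in \<open>auto simp: bij_def\<close>)
    ultimately show ?thesis by simp
  qed
  have perm1: "r \<circ> q \<circ> inv r permutes UNIV" if "q permutes (UNIV::'m set)" for q
    using that r by (intro bij_imp_permutes) (auto intro!: bij_comp bij_imp_bij_inv simp: permutes_bij bij_imp_bij_inv)
  have perm2: "inv r \<circ> p \<circ> r permutes UNIV" if "p permutes (UNIV::'n set)" for p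
    using that r by (intro bij_imp_permutes) (auto intro!: bij_comp bij_imp_bij_inv simp: permutes_bij bij_imp_bij_inv)
  have prodeq: "(\<Prod>k\<in>UNIV. A $ k $ (r \<circ> q \<circ> inv r) k) = (\<Prod>i\<in>UNIV. A $ r i $ r (q i))" for q :: "'m \<Rightarrow> 'm"
  proof -
    have "(\<Prod>k\<in>UNIV. A $ k $ (r \<circ> q \<circ> inv r) k) = (\<Prod>i\<in>UNIV. A $ r i $ (r \<circ> q \<circ> inv r) (r i))"
      using prod.reindex_bij_betw[of r UNIV UNIV "\<lambda>k. A $ k $ (r \<circ> q \<circ> inv r) k"] r by simp
    also have "\<dots> = (\<Prod>i\<in>UNIV. A $ r i $ r (q i))"
      using r by (simp add: bij_is_inj)
    finally show ?thesis .
  qed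
  show ?thesis
    unfolding det_def
    apply (rule sum.reindex_bij_witness[of _ "\<lambda>p. inv r \<circ> p \<circ> r" "\<lambda>q. r \<circ> q \<circ> inv r"])
    using r perm1 perm2 sgn prodeq
    by (auto simp: fun_eq_iff bij_is_inj bij_is_surj surj_f_inv_f)
qed

typedef 'a wo = "UNIV :: 'a set" by simp

instance wo :: (finite) finite
proof
  have "(UNIV :: 'a wo set) = Abs_wo ` UNIV"
    by (metis Rep_wo_inverse surj_def)
  then show "finite (UNIV :: 'a wo set)" by (metis finite finite_imageI)
qed

instantiation wo :: (finite) linorder
begin
definition less_eq_wo :: "'a wo \<Rightarrow> 'a wo \<Rightarrow> bool" where
  "less_eq_wo x y \<longleftrightarrow> to_nat (Rep_wo x) \<le> to_nat (Rep_wo y)"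
definition less_wo :: "'a wo \<Rightarrow> 'a wo \<Rightarrow> bool" where
  "less_wo x y \<longleftrightarrow> to_nat (Rep_wo x) < to_nat (Rep_wo y)"
instance
  by standard (auto simp: less_eq_wo_def less_wo_def Rep_wo_inject)
end

instance wo :: (finite) wellorder
proof
  fix P :: "'a wo \<Rightarrow> bool" and a :: "'a wo"
  assume H: "\<And>x. (\<And>y. y < x \<Longrightarrow> P y) \<Longrightarrow> P x"
  have "\<And>n x. to_nat (Rep_wo x) = n \<Longrightarrow> P x"
  proof -
    fix n show "\<And>x. to_nat (Rep_wo x) = n \<Longrightarrow> P x"
    proof (induction n rule: less_induct)
      case (less n)
      show ?case by (rule H) (use less in \<open>auto simp: less_wo_def\<close>)
    qed
  qed
  then show "P a" by blast
qed

definition Tw :: "real^'a::finite \<Rightarrow> real^'a wo" where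
  "Tw x = (\<chi> j. x $ Rep_wo j)"
definition Tv :: "real^'a wo \<Rightarrow> real^'a::finite" where
  "Tv y = (\<chi> i. y $ Abs_wo i)"

lemma Tv_Tw[simp]: "Tv (Tw x) = x" by (simp add: Tv_def Tw_def Abs_wo_inverse vec_eq_iff)
lemma Tw_Tv[simp]: "Tw (Tv y) = y" by (simp add: Tv_def Tw_def Rep_wo_inverse vec_eq_iff)
lemma linear_Tw: "linear Tw" by (rule linearI) (auto simp: Tw_def vec_eq_iff)
lemma linear_Tv: "linear Tv" by (rule linearI) (auto simp: Tv_def vec_eq_iff)
lemma bl_Tw: "bounded_linear Tw" using linear_Tw linear_conv_bounded_linear by blast
lemma bl_Tv: "bounded_linear Tv" using linear_Tv linear_conv_bounded_linear by blast
lemma Tw_meas[measurable]: "Tw \<in> borel_measurable borel"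
  using bl_Tw by (intro borel_measurable_continuous_onI linear_continuous_on)
lemma Tv_meas[measurable]: "Tv \<in> borel_measurable borel"
  using bl_Tv by (intro borel_measurable_continuous_onI linear_continuous_on)

lemma prod_Basis_vec: "(\<Prod>b\<in>(Basis :: (real^'n::finite) set). F b) = (\<Prod>i\<in>UNIV. F (axis i 1))"
proof -
  have e: "(Basis :: (real^'n) set) = (\<lambda>i. axis i 1) ` UNIV"
    by (auto simp: Basis_vec_def)
  have i: "inj (\<lambda>i::'n. axis i (1::real))" by (auto simp: inj_def axis_eq_axis)
  have "(\<Prod>b\<in>(Basis :: (real^'n::finite) set). F b) = prod F ((\<lambda>i. axis i 1) ` UNIV)" by (simp only: e)
  also have "\<dots> = prod (F \<circ> (\<lambda>i. axis i 1)) UNIV" by (rule prod.reindex[OF i])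
  finally show ?thesis by simp
qed

lemma distr_Tw: "distr lborel borel (Tw :: real^'a::finite \<Rightarrow> real^'a wo) = lborel"
proof (rule lborel_eqI[symmetric])
  fix l u :: "real^'a wo"
  assume le: "\<And>b. b \<in> Basis \<Longrightarrow> l \<bullet> b \<le> u \<bullet> b"
  have pre: "Tw -` box l u = box (Tv l) (Tv u)"
    by (auto simp: mem_box_cart Tw_def Tv_def) (metis Abs_wo_inverse UNIV_I Rep_wo_inverse)+
  have le': "Tv l \<bullet> b \<le> Tv u \<bullet> b" if "b \<in> Basis" for b
  proof -
    obtain i where b: "b = axis i 1" using \<open>b \<in> Basis\<close> by (auto simp: Basis_vec_def)
    have "axis (Abs_wo i) 1 \<in> (Basis :: (real^'a wo) set)" by (auto simp: Basis_vec_def)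
    from le[OF this] show ?thesis by (simp add: b inner_axis Tv_def)
  qed
  have "emeasure (distr lborel borel Tw) (box l u) = emeasure lborel (box (Tv l) (Tv u))"
    by (subst emeasure_distr) (auto simp: pre)
  also have "\<dots> = (\<Prod>b\<in>Basis. (Tv u - Tv l) \<bullet> b)"
    using le' by (rule emeasure_lborel_box)
  also have "\<dots> = (\<Prod>b\<in>Basis. (u - l) \<bullet> b)"
  proof -
    have "(\<Prod>b\<in>(Basis :: (real^'a) set). (Tv u - Tv l) \<bullet> b) = (\<Prod>i\<in>UNIV. u $ Abs_wo i - l $ Abs_wo i)"
      by (simp add: prod_Basis_vec inner_axis Tv_def)
    also have "\<dots> = (\<Prod>j\<in>UNIV. u $ j - l $ j)"
      using prod.reindex_bij_betw[of "Abs_wo :: 'a \<Rightarrow> 'a wo" UNIV UNIV "\<lambda>j. u $ j - l $ j"]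
      by (simp add: bij_betw_def inj_def Abs_wo_inject) (metis Rep_wo_inverse surj_def)
    also have "\<dots> = (\<Prod>b\<in>Basis. (u - l) \<bullet> b)"
      by (simp add: prod_Basis_vec inner_axis)
    finally show ?thesis by simp
  qed
  finally show "emeasure (distr lborel borel Tw) (box l u) = (\<Prod>b\<in>Basis. (u - l) \<bullet> b)" .
qed simp

lemma nn_integral_Tw:
  assumes "F \<in> borel_measurable borel"
  shows "(\<integral>\<^sup>+y. F y \<partial>(lborel :: (real^'a::finite wo) measure)) = (\<integral>\<^sup>+x. F (Tw x) \<partial>lborel)"
proof -
  have "(\<integral>\<^sup>+y. F y \<partial>(lborel :: (real^'a wo) measure)) = (\<integral>\<^sup>+y. F y \<partial>distr lborel borel (Tw :: real^'a \<Rightarrow> _))"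
    by (simp add: distr_Tw)
  also have "\<dots> = (\<integral>\<^sup>+x. F (Tw x) \<partial>lborel)"
    using assms by (subst nn_integral_distr) auto
  finally show ?thesis .
qed

lemma vec1_inner: "b \<in> (Basis :: (real^1) set) \<Longrightarrow> (vec x :: real^1) \<bullet> b = x"
  by (auto simp: Basis_vec_def inner_axis)

lemma hi_vec1: "((\<lambda>x. vec (f x) :: real^1) has_integral vec y) S \<longleftrightarrow> (f has_integral y) S"
proof -
  have "(Basis :: (real^1) set) \<noteq> {}" by simp
  then show ?thesis
    by (subst has_integral_componentwise_iff) (auto simp: vec1_inner)
qed

lemma ai_vec1: "((\<lambda>x. vec (f x) :: real^1) absolutely_integrable_on S) \<longleftrightarrow> (f absolutely_integrable_on S)"
proof -
  have "(Basis :: (real^1) set) \<noteq> {}" by simp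
  then show ?thesis
    by (subst absolutely_integrable_componentwise_iff) (auto simp: vec1_inner)
qed

lemma cov_wo:
  fixes \<Phi> :: "real^('m::{finite,wellorder}) \<Rightarrow> real^('m::_)" and h :: "real^('m::_) \<Rightarrow> real"
  assumes S: "S \<in> sets lebesgue"
    and der: "\<And>x. x \<in> S \<Longrightarrow> (\<Phi> has_derivative D x) (at x within S)"
    and inj: "inj_on \<Phi> S"
    and hm: "h \<in> borel_measurable borel" and hnn: "\<And>w. h w \<ge> 0"
    and neg: "negligible {w. h w \<noteq> 0 \<and> w \<notin> \<Phi> ` S}"
    and fin: "(\<integral>\<^sup>+w. ennreal (h w) \<partial>lborel) < \<infinity>"
  shows "(\<integral>\<^sup>+w. ennreal (h w) \<partial>lborel)
       = (\<integral>\<^sup>+u. ennreal (\<bar>det (matrix (D u))\<bar> * h (\<Phi> u)) * indicator S u \<partial>lborel)"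
proof -
  obtain r where r: "(\<integral>\<^sup>+w. ennreal (h w) \<partial>lborel) = ennreal r" "r \<ge> 0"
    using fin by (cases "(\<integral>\<^sup>+w. ennreal (h w) \<partial>lborel)") auto
  have "(h has_integral r) UNIV"
    by (rule nn_integral_has_integral) (use hm hnn r in auto)
  then have "((\<lambda>x. if x \<in> \<Phi> ` S then h x else 0) has_integral r) UNIV"
    by (rule has_integral_spike[OF neg, rotated]) auto
  then have hi: "(h has_integral r) (\<Phi> ` S)"
    by (simp add: has_integral_restrict_UNIV)
  then have "h absolutely_integrable_on (\<Phi> ` S)"
    using absolutely_integrable_on_iff_nonneg hnn by (metis has_integral_iff)
  then have a1: "(\<lambda>x. vec (h x) :: real^1) absolutely_integrable_on (\<Phi> ` S)"
    by (simp add: ai_vec1)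
  have a2: "integral (\<Phi> ` S) (\<lambda>x. vec (h x) :: real^1) = vec r"
    using hi by (simp add: hi_vec1[symmetric] integral_unique)
  have "(\<lambda>x. \<bar>det (matrix (D x))\<bar> *\<^sub>R (vec (h (\<Phi> x)) :: real^1)) absolutely_integrable_on S \<and>
           integral S (\<lambda>x. \<bar>det (matrix (D x))\<bar> *\<^sub>R (vec (h (\<Phi> x)) :: real^1)) = vec r"
    using has_absolute_integral_change_of_variables[OF S, of \<Phi> D "\<lambda>x. vec (h x)" "vec r"] der inj a1 a2 by blast
  moreover have "(\<lambda>x. \<bar>det (matrix (D x))\<bar> *\<^sub>R (vec (h (\<Phi> x)) :: real^1)) = (\<lambda>x. vec (\<bar>det (matrix (D x))\<bar> * h (\<Phi> x)))"
    by (simp add: vec_eq_iff fun_eq_iff)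
  ultimately have c: "(\<lambda>x. vec (\<bar>det (matrix (D x))\<bar> * h (\<Phi> x)) :: real^1) integrable_on S"
     "integral S (\<lambda>x. vec (\<bar>det (matrix (D x))\<bar> * h (\<Phi> x)) :: real^1) = vec r"
    unfolding absolutely_integrable_on_def by auto
  have "((\<lambda>x. vec (\<bar>det (matrix (D x))\<bar> * h (\<Phi> x)) :: real^1) has_integral vec r) S"
    using c(1) unfolding c(2)[symmetric] by (rule integrable_integral)
  then have "((\<lambda>x. \<bar>det (matrix (D x))\<bar> * h (\<Phi> x)) has_integral r) S"
    by (simp add: hi_vec1)
  from nn_integral_has_integral_lebesgue'[OF _ this]
  have "(\<integral>\<^sup>+u. ennreal (\<bar>det (matrix (D u))\<bar> * h (\<Phi> u)) * indicator S u \<partial>lborel) = ennreal r"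
    using hnn by simp
  with r show ?thesis by simp
qed



lemma card_wo: "CARD('a::finite wo) = CARD('a)"
proof -
  have "(UNIV :: 'a wo set) = Abs_wo ` UNIV" by (metis Rep_wo_inverse surj_def)
  moreover have "inj (Abs_wo :: 'a \<Rightarrow> 'a wo)" by (simp add: inj_def Abs_wo_inject)
  ultimately show ?thesis by (metis card_image)
qed

lemma bij_Rep_wo: "bij Rep_wo"
  by (metis Abs_wo_inverse Rep_wo_inject UNIV_I bij_iff)

lemma Tv_axis: "Tv (axis j 1 :: real^'a::finite wo) = axis (Rep_wo j) 1"
  by (auto simp: Tv_def axis_def vec_eq_iff) (metis Abs_wo_inverse UNIV_I Rep_wo_inverse)+

lemma cov_nn:
  fixes \<Phi> :: "real^'n::finite \<Rightarrow> real^'n" and h :: "real^'n \<Rightarrow> real"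
  assumes S: "open S"
    and der: "\<And>x. x \<in> S \<Longrightarrow> (\<Phi> has_derivative D x) (at x)"
    and inj: "inj_on \<Phi> S"
    and hm: "h \<in> borel_measurable borel" and hnn: "\<And>w. h w \<ge> 0"
    and neg: "negligible {w. h w \<noteq> 0 \<and> w \<notin> \<Phi> ` S}"
    and fin: "(\<integral>\<^sup>+w. ennreal (h w) \<partial>lborel) < \<infinity>"
    and Gm: "(\<lambda>u. ennreal (\<bar>det (matrix (D u))\<bar> * h (\<Phi> u)) * indicator S u) \<in> borel_measurable borel"
  shows "(\<integral>\<^sup>+w. ennreal (h w) \<partial>lborel)
       = (\<integral>\<^sup>+u. ennreal (\<bar>det (matrix (D u))\<bar> * h (\<Phi> u)) * indicator S u \<partial>lborel)"
proof -
  define \<Phi>q :: "real^'n wo \<Rightarrow> real^'n wo" where "\<Phi>q = Tw \<circ> \<Phi> \<circ> Tv"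
  define Sq where "Sq = Tv -` S"
  define Dq where "Dq y = Tw \<circ> D (Tv y) \<circ> Tv" for y
  define hq where "hq = h \<circ> Tv"
  define G where "G u = ennreal (\<bar>det (matrix (D u))\<bar> * h (\<Phi> u)) * indicator S u" for u
  have Sq_open: "open Sq" unfolding Sq_def
    by (rule open_vimage[OF S]) (simp add: bl_Tv linear_continuous_on)
  then have Sq: "Sq \<in> sets lebesgue" by simp
  have derq: "(\<Phi>q has_derivative Dq y) (at y within Sq)" if "y \<in> Sq" for y
  proof -
    have d1: "(Tv has_derivative Tv) (at y)" by (rule bounded_linear_imp_has_derivative[OF bl_Tv])
    have d2: "(\<Phi> has_derivative D (Tv y)) (at (Tv y))" using der that by (simp add: Sq_def)
    have d3: "(Tw has_derivative Tw) (at ((\<Phi> \<circ> Tv) y))" by (rule bounded_linear_imp_has_derivative[OF bl_Tw])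
    have "((Tw \<circ> (\<Phi> \<circ> Tv)) has_derivative (Tw \<circ> (D (Tv y) \<circ> Tv))) (at y)"
      by (rule diff_chain_at[OF diff_chain_at[OF d1 d2] d3])
    then show ?thesis unfolding \<Phi>q_def Dq_def by (simp add: o_assoc has_derivative_at_withinI)
  qed
  have injq: "inj_on \<Phi>q Sq"
  proof (rule inj_onI)
    fix x y assume xy: "x \<in> Sq" "y \<in> Sq" "\<Phi>q x = \<Phi>q y"
    then have "Tv (\<Phi>q x) = Tv (\<Phi>q y)" by simp
    then have "\<Phi> (Tv x) = \<Phi> (Tv y)" by (simp add: \<Phi>q_def)
    with inj xy have "Tv x = Tv y" by (auto simp: Sq_def inj_on_def)
    then show "x = y" by (metis Tw_Tv)
  qed
  have hqm: "hq \<in> borel_measurable borel" unfolding hq_def using hm by measurable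
  have hqnn: "\<And>y. hq y \<ge> 0" using hnn by (simp add: hq_def)
  have "{y. hq y \<noteq> 0 \<and> y \<notin> \<Phi>q ` Sq} \<subseteq> Tw ` {w. h w \<noteq> 0 \<and> w \<notin> \<Phi> ` S}"
  proof
    fix y assume y: "y \<in> {y. hq y \<noteq> 0 \<and> y \<notin> \<Phi>q ` Sq}"
    have "Tv y \<notin> \<Phi> ` S"
    proof
      assume "Tv y \<in> \<Phi> ` S"
      then obtain x where "x \<in> S" "Tv y = \<Phi> x" by auto
      then have "y = \<Phi>q (Tw x)" "Tw x \<in> Sq" by (simp_all add: \<Phi>q_def Sq_def) (metis Tw_Tv)
      with y show False by auto
    qed
    with y have "Tv y \<in> {w. h w \<noteq> 0 \<and> w \<notin> \<Phi> ` S}" by (simp add: hq_def)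
    then have "Tw (Tv y) \<in> Tw ` {w. h w \<noteq> 0 \<and> w \<notin> \<Phi> ` S}" by (rule imageI)
    then show "y \<in> Tw ` {w. h w \<noteq> 0 \<and> w \<notin> \<Phi> ` S}" by simp
  qed
  moreover have "negligible (Tw ` {w. h w \<noteq> 0 \<and> w \<notin> \<Phi> ` S})"
    by (rule negligible_differentiable_image_negligible[OF _ neg])
       (auto simp: card_wo intro!: linear_imp_differentiable_on linear_Tw)
  ultimately have negq: "negligible {y. hq y \<noteq> 0 \<and> y \<notin> \<Phi>q ` Sq}"
    using negligible_subset by blast
  have eqh: "(\<integral>\<^sup>+y. ennreal (hq y) \<partial>lborel) = (\<integral>\<^sup>+w. ennreal (h w) \<partial>lborel)"
    by (subst nn_integral_Tw) (use hm in \<open>auto simp: hq_def\<close>)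
  have finq: "(\<integral>\<^sup>+y. ennreal (hq y) \<partial>lborel) < \<infinity>" using fin eqh by simp
  have cq: "(\<integral>\<^sup>+y. ennreal (hq y) \<partial>lborel)
       = (\<integral>\<^sup>+y. ennreal (\<bar>det (matrix (Dq y))\<bar> * hq (\<Phi>q y)) * indicator Sq y \<partial>lborel)"
    by (rule cov_wo[OF Sq derq injq hqm hqnn negq finq])
  have deteq: "det (matrix (Dq y)) = det (matrix (D (Tv y)))" for y
  proof -
    have "matrix (Dq y) = (\<chi> i j. matrix (D (Tv y)) $ Rep_wo i $ Rep_wo j)"
      by (simp add: matrix_def Dq_def Tv_axis vec_eq_iff Tw_def)
    then show ?thesis using det_reindex[OF bij_Rep_wo] by simp
  qed
  have Geq: "ennreal (\<bar>det (matrix (Dq y))\<bar> * hq (\<Phi>q y)) * indicator Sq y = G (Tv y)" for y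
    by (simp add: deteq G_def hq_def \<Phi>q_def Sq_def indicator_def)
  have "(\<integral>\<^sup>+y. ennreal (\<bar>det (matrix (Dq y))\<bar> * hq (\<Phi>q y)) * indicator Sq y \<partial>lborel)
      = (\<integral>\<^sup>+y. G (Tv y) \<partial>lborel)" by (simp add: Geq)
  also have "\<dots> = (\<integral>\<^sup>+x. G (Tv (Tw x)) \<partial>lborel)"
    by (rule nn_integral_Tw) (use Gm in \<open>simp add: G_def[abs_def]\<close>)
  finally show ?thesis using cq eqh by (simp add: G_def)
qed

lemma deriv_right_upper:
  fixes \<phi> :: "real \<Rightarrow> real"
  assumes d: "(\<phi> has_real_derivative D) (at 0)"
    and b: "\<And>t. 0 < t \<Longrightarrow> t \<le> 1 \<Longrightarrow> (\<phi> t - \<phi> 0) / t \<le> B"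
  shows "D \<le> B"
proof -
  have "((\<lambda>h. (\<phi> (0 + h) - \<phi> 0) / h) \<longlongrightarrow> D) (at 0)" using d by (simp add: DERIV_def)
  then have l: "((\<lambda>h. (\<phi> h - \<phi> 0) / h) \<longlongrightarrow> D) (at_right 0)"
    by (simp add: filterlim_at_split)
  have "\<forall>\<^sub>F h in at_right 0. (\<phi> h - \<phi> 0) / h \<le> B"
    unfolding eventually_at_right_field
    by (rule exI[of _ 1]) (auto intro: b)
  from tendsto_upperbound[OF l this] show ?thesis by simp
qed

lemma deriv_right_lower:
  fixes \<phi> :: "real \<Rightarrow> real"
  assumes d: "(\<phi> has_real_derivative D) (at 0)"
    and b: "\<And>t. 0 < t \<Longrightarrow> t \<le> 1 \<Longrightarrow> B \<le> (\<phi> t - \<phi> 0) / t"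
  shows "B \<le> D"
proof -
  have "((\<lambda>h. (\<phi> (0 + h) - \<phi> 0) / h) \<longlongrightarrow> D) (at 0)" using d by (simp add: DERIV_def)
  then have l: "((\<lambda>h. (\<phi> h - \<phi> 0) / h) \<longlongrightarrow> D) (at_right 0)"
    by (simp add: filterlim_at_split)
  have "\<forall>\<^sub>F h in at_right 0. B \<le> (\<phi> h - \<phi> 0) / h"
    unfolding eventually_at_right_field
    by (rule exI[of _ 1]) (auto intro: b)
  from tendsto_lowerbound[OF l this] show ?thesis by simp
qed

lemma line_deriv:
  fixes f :: "'a::real_normed_vector \<Rightarrow> real"
  assumes "(f has_derivative f') (at b)"
  shows "((\<lambda>t. f (b + t *\<^sub>R d)) has_real_derivative f' d) (at 0)"
proof -
  have l: "((\<lambda>t. b + t *\<^sub>R d) has_derivative (\<lambda>t. t *\<^sub>R d)) (at 0)"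
    by (auto intro!: derivative_eq_intros)
  have f: "(f has_derivative f') (at ((\<lambda>t. b + t *\<^sub>R d) 0))" using assms by simp
  have "((f \<circ> (\<lambda>t. b + t *\<^sub>R d)) has_derivative (f' \<circ> (\<lambda>t. t *\<^sub>R d))) (at 0)"
    by (rule diff_chain_at[OF l f])
  moreover have "linear f'" using assms has_derivative_linear by blast
  then have "f' \<circ> (\<lambda>t. t *\<^sub>R d) = (\<lambda>t. t * f' d)"
    by (auto simp: fun_eq_iff linear_scale)
  moreover have "(\<lambda>t. t * f' d) = (*) (f' d)" by (auto simp: fun_eq_iff)
  ultimately show ?thesis by (simp add: has_field_derivative_def o_def)
qed

lemma convex_tangent:
  fixes f :: "real^'n::finite \<Rightarrow> real"
  assumes cv: "convex_on UNIV f" and d: "(f has_derivative (\<lambda>h. gr \<bullet> h)) (at b)"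
  shows "f b + gr \<bullet> (c - b) \<le> f c"
proof -
  define \<phi> where "\<phi> t = f (b + t *\<^sub>R (c - b))" for t
  have D: "(\<phi> has_real_derivative gr \<bullet> (c - b)) (at 0)"
    unfolding \<phi>_def by (rule line_deriv[OF d])
  have "gr \<bullet> (c - b) \<le> \<phi> 1 - \<phi> 0"
  proof (rule deriv_right_upper[OF D])
    fix t :: real assume t: "0 < t" "t \<le> 1"
    have "b + t *\<^sub>R (c - b) = (1 - t) *\<^sub>R b + t *\<^sub>R c" by (simp add: algebra_simps)
    then have "\<phi> t \<le> (1 - t) * \<phi> 0 + t * \<phi> 1"
      using convex_onD[OF cv, of t b c] t by (simp add: \<phi>_def)
    then have "\<phi> t - \<phi> 0 \<le> t * (\<phi> 1 - \<phi> 0)" by (simp add: algebra_simps)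
    then show "(\<phi> t - \<phi> 0) / t \<le> \<phi> 1 - \<phi> 0" using t by (simp add: divide_le_eq mult.commute)
  qed
  then show ?thesis by (simp add: \<phi>_def)
qed

lemma hess_psd:
  fixes f :: "real^'n::finite \<Rightarrow> real" and gm :: "real^'n \<Rightarrow> real^'n"
  assumes cv: "convex_on UNIV f" and d: "\<And>b. (f has_derivative (\<lambda>h. gm b \<bullet> h)) (at b)"
    and dg: "(gm has_derivative Hb) (at b)"
  shows "0 \<le> v \<bullet> Hb v"
proof -
  define \<psi> where "\<psi> t = v \<bullet> gm (b + t *\<^sub>R v)" for t
  have D: "(\<psi> has_real_derivative v \<bullet> Hb v) (at 0)"
  proof -
    have "((\<lambda>x. v \<bullet> gm x) has_derivative (\<lambda>h. v \<bullet> Hb h)) (at b)"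
      using dg by (auto intro!: derivative_eq_intros)
    from line_deriv[OF this, of v] show ?thesis unfolding \<psi>_def[abs_def] by simp
  qed
  show ?thesis
  proof (rule deriv_right_lower[OF D])
    fix t :: real assume t: "0 < t" "t \<le> 1"
    have a1: "f b + gm b \<bullet> ((b + t *\<^sub>R v) - b) \<le> f (b + t *\<^sub>R v)"
      by (rule convex_tangent[OF cv d])
    have a2: "f (b + t *\<^sub>R v) + gm (b + t *\<^sub>R v) \<bullet> (b - (b + t *\<^sub>R v)) \<le> f b"
      by (rule convex_tangent[OF cv d])
    from a1 a2 have "t * (v \<bullet> gm b) \<le> t * (v \<bullet> gm (b + t *\<^sub>R v))"
      by (simp add: inner_commute algebra_simps)
    then have "\<psi> 0 \<le> \<psi> t" using t by (simp add: \<psi>_def)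
    then show "0 \<le> (\<psi> t - \<psi> 0) / t" using t by simp
  qed
qed

lemma jac_nonneg_gen:
  fixes M :: "real^'n::finite \<Rightarrow> real^'n"
  assumes lin: "linear M" and psd: "\<And>x. 0 \<le> x \<bullet> M x" and lam: "lam > 0"
  shows "0 \<le> det (matrix (\<lambda>v. M (\<chi> i. if i \<in> E then v $ i else 0) + lam *\<^sub>R (\<chi> i. if i \<in> E then 0 else v $ i)))"
proof -
  define P where "P v = (\<chi> i. if i \<in> E then v $ i else 0)" for v :: "real^'n"
  define Q where "Q v = (\<chi> i. if i \<in> E then 0 else v $ i)" for v :: "real^'n"
  define L where "L t v = (1 - t) *\<^sub>R M (P v) + t *\<^sub>R P v + lam *\<^sub>R Q v" for t v
  define d where "d t = det (matrix (L t))" for t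
  have linP: "linear P" by (rule linearI) (auto simp: P_def vec_eq_iff)
  have linQ: "linear Q" by (rule linearI) (auto simp: Q_def vec_eq_iff)
  have linL: "linear (L t)" for t
    by (rule linearI) (auto simp: L_def linear_add[OF linP] linear_add[OF lin] linear_scale[OF linP]
         linear_scale[OF lin] linear_add[OF linQ] linear_scale[OF linQ] algebra_simps)
  have goal: "d 0 = det (matrix (\<lambda>v. M (\<chi> i. if i \<in> E then v $ i else 0) + lam *\<^sub>R (\<chi> i. if i \<in> E then 0 else v $ i)))"
    by (simp add: d_def L_def[abs_def] P_def Q_def)
  have cont: "continuous_on {0..1} d"
    unfolding d_def det_def matrix_def L_def
    by (simp add: vector_add_component vector_scaleR_component) (intro continuous_intros)
  have nz: "d t \<noteq> 0" if t: "0 < t" "t \<le> 1" for t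
  proof -
    have "inj (L t)"
      unfolding linear_injective_0[OF linL]
    proof (intro allI impI)
      fix v assume v: "L t v = 0"
      have xy: "P v \<bullet> Q v = 0"
        by (simp add: inner_vec_def P_def Q_def, rule sum.neutral, simp)
      have "0 = P v \<bullet> L t v" using v by simp
      also have "\<dots> = (1 - t) * (P v \<bullet> M (P v)) + t * (P v \<bullet> P v) + lam * (P v \<bullet> Q v)"
        by (simp add: L_def inner_add_right)
      moreover have "0 \<le> (1 - t) * (P v \<bullet> M (P v))" using t psd[of "P v"] by simp
      moreover have "lam * (P v \<bullet> Q v) = 0" using xy by simp
      ultimately have "t * (P v \<bullet> P v) \<le> 0" by linarith
      then have "P v \<bullet> P v \<le> 0" using t by (simp add: mult_le_0_iff)
      then have "P v \<bullet> P v = 0" using inner_ge_zero[of "P v"] by linarith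
      then have p0: "P v = 0" by (simp only: inner_eq_zero_iff)
      then have "M (P v) = 0" using linear_0[OF lin] by simp
      with v p0 have "lam *\<^sub>R Q v = 0" by (simp add: L_def linear_0[OF linP])
      then have "Q v = 0" using lam by simp
      with p0 show "v = 0" by (simp add: P_def Q_def vec_eq_iff) (metis (full_types))
    qed
    then show ?thesis unfolding d_def using det_nz_iff_inj[OF linL] by blast
  qed
  have d1: "0 < d 1"
  proof -
    have ax: "\<And>i j. axis j (1::real) $ i = (if i = j then 1 else 0)" for i j :: 'n
      by (simp add: axis_def)
    have "d 1 = (\<Prod>i\<in>UNIV. (if i \<in> E then 1 else lam))"
      unfolding d_def
      by (subst det_diagonal) (auto simp: matrix_def L_def P_def Q_def ax intro!: prod.cong)
    also have "\<dots> > 0" using lam by (intro prod_pos) auto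
    finally show ?thesis .
  qed
  have "0 \<le> d 0"
  proof (rule ccontr)
    assume "\<not> 0 \<le> d 0"
    then have "d 0 \<le> 0" by simp
    from IVT'[of d 0 0 1, OF this] d1 cont obtain x where x: "0 \<le> x" "x \<le> 1" "d x = 0" by auto
    with nz \<open>\<not> 0 \<le> d 0\<close> show False by (cases "x = 0") auto
  qed
  with goal show ?thesis by simp
qed


definition Ucube :: "'p::finite set \<Rightarrow> (real^'p) set" where
  "Ucube E = {u. \<forall>i. i \<notin> E \<longrightarrow> \<bar>u $ i\<bar> < 1}"

lemma minimizer_of_U:
  fixes ell :: "'a \<Rightarrow> real^'p::finite \<Rightarrow> real" and gam :: "'a \<Rightarrow> real^'p \<Rightarrow> real^'p"
  assumes cv: "convex_on UNIV (ell s)" and d: "\<And>b. (ell s has_derivative (\<lambda>h. gam s b \<bullet> h)) (at b)"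
    and lam: "lam > 0" and u: "u \<in> Ucube E"
  shows "is_minimizer ell lam s (gam s (beta_of E u) + lam *\<^sub>R z_of E u) (beta_of E u)"
  unfolding is_minimizer_def
proof
  fix c
  define b where "b = beta_of E u"
  define z where "z = z_of E u"
  have t: "ell s b + gam s b \<bullet> (c - b) \<le> ell s c" by (rule convex_tangent[OF cv d])
  have zc: "z \<bullet> c \<le> (\<Sum>i\<in>UNIV. \<bar>c $ i\<bar>)"
    unfolding inner_vec_def inner_real_def
  proof (rule sum_mono)
    fix i
    have "\<bar>z $ i\<bar> \<le> 1" using u by (auto simp: z_def z_of_def Ucube_def sgn_if)
    then have "z $ i * c $ i \<le> \<bar>z $ i\<bar> * \<bar>c $ i\<bar>" by (metis abs_ge_self abs_mult)
    also have "\<dots> \<le> \<bar>c $ i\<bar>" using \<open>\<bar>z $ i\<bar> \<le> 1\<close> by (simp add: mult_left_le_one_le)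
    finally show "z $ i * c $ i \<le> \<bar>c $ i\<bar>" .
  qed
  have zb: "z \<bullet> b = (\<Sum>i\<in>UNIV. \<bar>b $ i\<bar>)"
    unfolding inner_vec_def inner_real_def by (rule sum.cong) (auto simp: z_def b_def z_of_def beta_of_def abs_sgn)
  have "lasso_obj ell lam s (gam s b + lam *\<^sub>R z) b
      = ell s b + lam * (\<Sum>i\<in>UNIV. \<bar>b $ i\<bar>) - (gam s b + lam *\<^sub>R z) \<bullet> b"
    by (simp add: lasso_obj_def)
  also have "\<dots> = ell s b - gam s b \<bullet> b" using zb by (simp add: inner_add_left)
  also have "\<dots> \<le> ell s c - gam s b \<bullet> c" using t by (simp add: inner_diff_right)
  also have "\<dots> \<le> ell s c + lam * (\<Sum>i\<in>UNIV. \<bar>c $ i\<bar>) - (gam s b + lam *\<^sub>R z) \<bullet> c"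
    using zc lam by (simp add: inner_add_left mult_left_mono)
  also have "\<dots> = lasso_obj ell lam s (gam s b + lam *\<^sub>R z) c" by (simp add: lasso_obj_def)
  finally show "lasso_obj ell lam s (gam s (beta_of E u) + lam *\<^sub>R z_of E u) (beta_of E u)
      \<le> lasso_obj ell lam s (gam s (beta_of E u) + lam *\<^sub>R z_of E u) c"
    by (simp add: b_def z_def)
qed

lemma bhat_of_U:
  fixes ell :: "'a \<Rightarrow> real^'p::finite \<Rightarrow> real" and gam :: "'a \<Rightarrow> real^'p \<Rightarrow> real^'p"
  assumes cv: "convex_on UNIV (ell s)" and d: "\<And>b. (ell s has_derivative (\<lambda>h. gam s b \<bullet> h)) (at b)"
    and lam: "lam > 0" and u: "u \<in> Ucube E"
    and uniq: "\<And>w. \<exists>!b. is_minimizer ell lam s w b"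
  shows "beta_hat ell lam s (gam s (beta_of E u) + lam *\<^sub>R z_of E u) = beta_of E u"
    and "z_hat ell gam lam s (gam s (beta_of E u) + lam *\<^sub>R z_of E u) = z_of E u"
proof -
  show b: "beta_hat ell lam s (gam s (beta_of E u) + lam *\<^sub>R z_of E u) = beta_of E u"
    unfolding beta_hat_def by (rule the1_equality[OF uniq minimizer_of_U[of ell s gam lam u E, OF cv d lam u]])
  show "z_hat ell gam lam s (gam s (beta_of E u) + lam *\<^sub>R z_of E u) = z_of E u"
    using lam by (simp add: z_hat_def b)
qed

lemma free_coords_of: "free_coords E (beta_of E u) (z_of E u) = u"
  by (simp add: free_coords_def beta_of_def z_of_def vec_eq_iff)

lemma Bset_free:
  assumes "(b, z) \<in> Bset E"
  shows "free_coords E b z \<in> Ucube E" "beta_of E (free_coords E b z) = b" "z_of E (free_coords E b z) = z"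
  using assms by (auto simp: Bset_def free_coords_def beta_of_def z_of_def Ucube_def vec_eq_iff)

lemma Bset_of_U: "(beta_of E u, z_of E u) \<in> Bset E \<longleftrightarrow> u \<in> Ucube E"
  by (auto simp: Bset_def beta_of_def z_of_def Ucube_def)

lemma zhat_eq:
  assumes "lam > 0"
  shows "gam s (beta_hat ell lam s w) + lam *\<^sub>R z_hat ell gam lam s w = w"
  using assms by (simp add: z_hat_def)


lemma meas_vec_nth0[measurable]: "(\<lambda>x::real^'n::finite. x $ i) \<in> borel_measurable borel"
  by (intro borel_measurable_continuous_onI linear_continuous_on bounded_linear_vec_nth bounded_linear_ident)

lemma meas_vec_nth:
  fixes F :: "'b \<Rightarrow> real^'n::finite"
  assumes "F \<in> borel_measurable M"
  shows "(\<lambda>x. F x $ i) \<in> borel_measurable M"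
  by (rule borel_measurable_continuous_on[OF _ assms])
     (intro linear_continuous_on bounded_linear_vec_nth bounded_linear_ident)

lemma meas_vec_lambda:
  fixes F :: "'b \<Rightarrow> 'n::finite \<Rightarrow> real"
  assumes "\<And>i. (\<lambda>x. F x i) \<in> borel_measurable M"
  shows "(\<lambda>x. (\<chi> i. F x i) :: real^'n) \<in> borel_measurable M"
proof (rule iffD2[OF borel_measurable_euclidean_space], intro ballI)
  fix b :: "real^'n" assume "b \<in> Basis"
  then obtain i where b: "b = axis i 1" by (auto simp: Basis_vec_def)
  show "(\<lambda>x. (\<chi> i. F x i) \<bullet> b) \<in> borel_measurable M"
    unfolding b inner_axis using assms[of i] by simp
qed


lemma meas_beta_of[measurable]: "beta_of E \<in> borel_measurable borel"
  unfolding beta_of_def by (intro meas_vec_lambda) measurable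

lemma meas_z_of[measurable]: "z_of E \<in> borel_measurable borel"
  unfolding z_of_def by (intro meas_vec_lambda) measurable

lemma meas_free_coords[measurable]:
  "(\<lambda>x. free_coords E (F x) (G x)) \<in> borel_measurable M"
  if "F \<in> borel_measurable M" "G \<in> borel_measurable M"
  unfolding free_coords_def
proof (intro meas_vec_lambda)
  fix i show "(\<lambda>x. if i \<in> E then F x $ i else G x $ i) \<in> borel_measurable M"
    by (cases "i \<in> E") (simp_all add: meas_vec_nth that)
qed

lemma pred_Bset[measurable]:
  fixes F G :: "'b \<Rightarrow> real^'p::finite"
  assumes [measurable]: "F \<in> borel_measurable M" "G \<in> borel_measurable M"
  shows "Measurable.pred M (\<lambda>x. (F x, G x) \<in> Bset E)"
  unfolding Bset_def mem_Collect_eq case_prod_conv by measurable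

lemma meas_gam_comp:
  fixes gam :: "'a \<Rightarrow> real^'p::finite \<Rightarrow> real^'p"
  assumes gm: "(\<lambda>(s, b). gam s b) \<in> borel_measurable (mu \<Otimes>\<^sub>M lborel)"
    and K: "K \<in> borel_measurable (mu \<Otimes>\<^sub>M (lborel :: (real^'p) measure))"
  shows "(\<lambda>x. gam (fst x) (K x)) \<in> borel_measurable (mu \<Otimes>\<^sub>M (lborel :: (real^'p) measure))"
proof -
  have "(\<lambda>x. (fst x, K x)) \<in> measurable (mu \<Otimes>\<^sub>M lborel) (mu \<Otimes>\<^sub>M lborel)"
    using K by (intro measurable_Pair) (auto simp: measurable_lborel1)
  from measurable_comp[OF this gm] show ?thesis by (simp add: o_def)
qed


lemma meas_H_entry:
  fixes gam :: "'a \<Rightarrow> real^'p::finite \<Rightarrow> real^'p" and H :: "'a \<Rightarrow> real^'p \<Rightarrow> real^'p \<Rightarrow> real^'p"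
  assumes gm: "(\<lambda>(s, b). gam s b) \<in> borel_measurable (mu \<Otimes>\<^sub>M lborel)"
    and gd: "\<And>s b. (gam s has_derivative H s b) (at b)"
    and K: "K \<in> borel_measurable (mu \<Otimes>\<^sub>M (lborel :: (real^'p) measure))"
  shows "(\<lambda>x. H (fst x) (K x) v $ i) \<in> borel_measurable (mu \<Otimes>\<^sub>M (lborel :: (real^'p) measure))"
proof (rule borel_measurable_LIMSEQ_real)
  define t where "t n = inverse (real (Suc n))" for n
  let ?u = "\<lambda>n x. (gam (fst x) (K x + t n *\<^sub>R v) $ i - gam (fst x) (K x) $ i) / t n"
  show "\<And>n. ?u n \<in> borel_measurable (mu \<Otimes>\<^sub>M lborel)"
  proof -
    fix n
    have "(\<lambda>x. K x + t n *\<^sub>R v) \<in> borel_measurable (mu \<Otimes>\<^sub>M lborel)" using K by measurable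
    from meas_gam_comp[OF gm this] meas_gam_comp[OF gm K]
    show "?u n \<in> borel_measurable (mu \<Otimes>\<^sub>M lborel)"
      by (intro borel_measurable_divide borel_measurable_diff meas_vec_nth) auto
  qed
  fix x :: "'a \<times> (real^'p)"
  define s where "s = fst x"
  define b where "b = K x"
  have d1: "((\<lambda>y. gam s y $ i) has_derivative (\<lambda>h. H s b h $ i)) (at b)"
    by (rule bounded_linear.has_derivative[OF bounded_linear_vec_nth gd])
  have "((\<lambda>r. gam s (b + r *\<^sub>R v) $ i) has_real_derivative H s b v $ i) (at 0)"
    using line_deriv[OF d1, of v] by simp
  then have l: "(\<lambda>h. (gam s (b + (0 + h) *\<^sub>R v) $ i - gam s (b + 0 *\<^sub>R v) $ i) / h) \<midarrow>0\<rightarrow> H s b v $ i"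
    by (simp add: DERIV_def)
  have tn: "\<forall>n. t n \<noteq> 0" "t \<longlonglongrightarrow> 0"
    using LIMSEQ_inverse_real_of_nat unfolding t_def[abs_def] by auto
  from l[unfolded LIMSEQ_SEQ_conv[symmetric]] tn
  have "(\<lambda>n. (gam s (b + t n *\<^sub>R v) $ i - gam s b $ i) / t n) \<longlonglongrightarrow> H s b v $ i"
    by auto
  then show "(\<lambda>n. ?u n x) \<longlonglongrightarrow> H (fst x) (K x) v $ i" by (simp add: s_def b_def)
qed

lemma meas_jac:
  fixes gam :: "'a \<Rightarrow> real^'p::finite \<Rightarrow> real^'p" and H :: "'a \<Rightarrow> real^'p \<Rightarrow> real^'p \<Rightarrow> real^'p"
  assumes gm: "(\<lambda>(s, b). gam s b) \<in> borel_measurable (mu \<Otimes>\<^sub>M lborel)"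
    and gd: "\<And>s b. (gam s has_derivative H s b) (at b)"
  shows "(\<lambda>x. jac_psi H lam E (fst x) (beta_of E (snd x))) \<in> borel_measurable (mu \<Otimes>\<^sub>M (lborel :: (real^'p) measure))"
proof -
  have K: "(\<lambda>x. beta_of E (snd x)) \<in> borel_measurable (mu \<Otimes>\<^sub>M (lborel :: (real^'p) measure))"
    by measurable
  note e = meas_H_entry[OF gm gd K]
  show ?thesis
    unfolding jac_psi_def det_def matrix_def
    apply (simp only: vec_lambda_beta vector_add_component vector_scaleR_component)
    apply (intro borel_measurable_sum borel_measurable_times borel_measurable_prod borel_measurable_add borel_measurable_const e)
    done
qed


lemma jac_nonneg:
  fixes ell :: "'a \<Rightarrow> real^'p::finite \<Rightarrow> real" and gam :: "'a \<Rightarrow> real^'p \<Rightarrow> real^'p"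
  assumes cv: "convex_on UNIV (ell s)" and d: "\<And>b. (ell s has_derivative (\<lambda>h. gam s b \<bullet> h)) (at b)"
    and gd: "\<And>b. (gam s has_derivative H s b) (at b)" and lam: "lam > 0"
  shows "0 \<le> jac_psi H lam E s b"
  unfolding jac_psi_def
proof (rule jac_nonneg_gen[OF _ _ lam])
  show "linear (H s b)" using gd has_derivative_linear by blast
  show "\<And>x. 0 \<le> x \<bullet> H s b x" by (rule hess_psd[OF cv d gd])
qed

lemma Phi_deriv:
  fixes gam :: "'a \<Rightarrow> real^'p::finite \<Rightarrow> real^'p"
  assumes gd: "\<And>b. (gam s has_derivative H s b) (at b)" and u: "\<forall>i\<in>E. u $ i \<noteq> 0"
  shows "((\<lambda>u. gam s (beta_of E u) + lam *\<^sub>R z_of E u) has_derivative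
          (\<lambda>v. H s (beta_of E u) (\<chi> i. if i \<in> E then v $ i else 0) + lam *\<^sub>R (\<chi> i. if i \<in> E then 0 else v $ i))) (at u)"
proof -
  define c :: "real^'p" where "c = (\<chi> i. if i \<in> E then sgn (u $ i) else 0)"
  define Q :: "real^'p \<Rightarrow> real^'p" where "Q v = (\<chi> i. if i \<in> E then 0 else v $ i)" for v
  have linB: "linear (beta_of E)" by (rule linearI) (auto simp: beta_of_def vec_eq_iff)
  have linQ: "linear Q" by (rule linearI) (auto simp: Q_def vec_eq_iff)
  have dB: "(beta_of E has_derivative beta_of E) (at u)"
    using linB by (simp add: bounded_linear_imp_has_derivative linear_conv_bounded_linear)
  have dQ: "(Q has_derivative Q) (at u)"
    using linQ by (simp add: bounded_linear_imp_has_derivative linear_conv_bounded_linear)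
  have dG: "((gam s \<circ> beta_of E) has_derivative (H s (beta_of E u) \<circ> beta_of E)) (at u)"
    by (rule diff_chain_at[OF dB gd])
  have d0: "((\<lambda>v. gam s (beta_of E v) + lam *\<^sub>R (c + Q v)) has_derivative
          (\<lambda>v. H s (beta_of E u) (beta_of E v) + lam *\<^sub>R Q v)) (at u)"
    using dG dQ by (auto intro!: derivative_eq_intros simp: o_def)
  define d where "d = Min (insert 1 ((\<lambda>i. \<bar>u $ i\<bar>) ` E))"
  have dpos: "0 < d" unfolding d_def using u by (subst Min_gr_iff) auto
  have eq: "gam s (beta_of E v) + lam *\<^sub>R (c + Q v) = gam s (beta_of E v) + lam *\<^sub>R z_of E v"
    if v: "v \<in> ball u d" for v
  proof -
    have "sgn (v $ i) = sgn (u $ i)" if i: "i \<in> E" for i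
    proof -
      have "\<bar>u $ i - v $ i\<bar> \<le> norm (u - v)" using component_le_norm_cart[of "u - v" i] by simp
      also have "\<dots> < d" using v by (simp add: dist_norm)
      also have "d \<le> \<bar>u $ i\<bar>" unfolding d_def using i by (intro Min_le) auto
      finally have "\<bar>u $ i - v $ i\<bar> < \<bar>u $ i\<bar>" .
      then show ?thesis by (auto simp: sgn_if split: if_splits)
    qed
    then have "c + Q v = z_of E v" by (auto simp: c_def Q_def z_of_def vec_eq_iff)
    then show ?thesis by simp
  qed
  have "((\<lambda>v. gam s (beta_of E v) + lam *\<^sub>R z_of E v) has_derivative
          (\<lambda>v. H s (beta_of E u) (beta_of E v) + lam *\<^sub>R Q v)) (at u)"
    by (rule has_derivative_transform_within_open[OF d0 open_ball]) (use dpos eq in auto)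
  then show ?thesis by (simp add: beta_of_def Q_def)
qed


lemma finite_sign_vecs: "finite {\<sigma> :: real^'p::finite. \<forall>i. \<sigma> $ i \<in> {-1, 0, 1}}"
proof (rule finite_subset)
  show "{\<sigma> :: real^'p. \<forall>i. \<sigma> $ i \<in> {-1, 0, 1}} \<subseteq> (\<lambda>f. \<chi> i. f i) ` (PiE UNIV (\<lambda>_. {-1, 0, 1::real}))"
  proof
    fix \<sigma> :: "real^'p" assume "\<sigma> \<in> {\<sigma>. \<forall>i. \<sigma> $ i \<in> {-1, 0, 1}}"
    then have "(\<lambda>i. \<sigma> $ i) \<in> PiE UNIV (\<lambda>_. {-1, 0, 1::real})" by (auto simp: PiE_iff)
    moreover have "\<sigma> = (\<chi> i. (\<lambda>i. \<sigma> $ i) i)" by simp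
    ultimately show "\<sigma> \<in> (\<lambda>f. \<chi> i. f i) ` (PiE UNIV (\<lambda>_. {-1, 0, 1::real}))" by blast
  qed
  show "finite ((\<lambda>f. \<chi> i. f i) ` (PiE UNIV (\<lambda>_. {-1, 0, 1::real})) :: (real^'p) set)"
    by (intro finite_imageI finite_PiE) auto
qed

lemma neg_image_bad:
  fixes gam :: "'a \<Rightarrow> real^'p::finite \<Rightarrow> real^'p"
  assumes gd: "\<And>b. (gam s has_derivative H s b) (at b)"
  shows "negligible ((\<lambda>u. gam s (beta_of E u) + lam *\<^sub>R z_of E u) ` {u. \<exists>i\<in>E. u $ i = 0})"
proof -
  define N :: "(real^'p) set" where "N = {u. \<exists>i\<in>E. u $ i = 0}"
  define V :: "(real^'p) set" where "V = {\<sigma>. \<forall>i. \<sigma> $ i \<in> {-1, 0, 1}}"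
  define F where "F \<sigma> u = gam s (beta_of E u) + lam *\<^sub>R (\<chi> i. if i \<in> E then \<sigma> $ i else u $ i)" for \<sigma> u
  have negN: "negligible N"
  proof -
    have "N = \<Union> ((\<lambda>i. {u :: real^'p. u $ i = 0}) ` E)" by (auto simp: N_def)
    moreover have "negligible (\<Union> ((\<lambda>i. {u :: real^'p. u $ i = 0}) ` E))"
      by (intro negligible_Union finite_imageI) (auto intro: negligible_standard_hyperplane_cart)
    ultimately show ?thesis by simp
  qed
  have linB: "linear (beta_of E)" by (rule linearI) (auto simp: beta_of_def vec_eq_iff)
  define Q :: "real^'p \<Rightarrow> real^'p" where "Q v = (\<chi> i. if i \<in> E then 0 else v $ i)" for v
  have linQ: "linear Q" by (rule linearI) (auto simp: Q_def vec_eq_iff)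
  have diff: "F \<sigma> differentiable_on N" for \<sigma>
  proof -
    have "F \<sigma> differentiable (at u)" for u
    proof -
      have dB: "(beta_of E has_derivative beta_of E) (at u)"
        using linB by (simp add: bounded_linear_imp_has_derivative linear_conv_bounded_linear)
      have dQ: "(Q has_derivative Q) (at u)"
        using linQ by (simp add: bounded_linear_imp_has_derivative linear_conv_bounded_linear)
      have dG: "((gam s \<circ> beta_of E) has_derivative (H s (beta_of E u) \<circ> beta_of E)) (at u)"
        by (rule diff_chain_at[OF dB gd])
      have "F \<sigma> = (\<lambda>v. gam s (beta_of E v) + lam *\<^sub>R ((\<chi> i. if i \<in> E then \<sigma> $ i else 0) + Q v))"
        by (auto simp: F_def Q_def fun_eq_iff vec_eq_iff)
      moreover have "((\<lambda>v. gam s (beta_of E v) + lam *\<^sub>R ((\<chi> i. if i \<in> E then \<sigma> $ i else 0) + Q v)) has_derivative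
          (\<lambda>v. H s (beta_of E u) (beta_of E v) + lam *\<^sub>R Q v)) (at u)"
        using dG dQ by (auto intro!: derivative_eq_intros simp: o_def)
      ultimately show ?thesis unfolding differentiable_def by auto
    qed
    then show ?thesis by (simp add: differentiable_at_imp_differentiable_on)
  qed
  have sub: "(\<lambda>u. gam s (beta_of E u) + lam *\<^sub>R z_of E u) ` N \<subseteq> \<Union> ((\<lambda>\<sigma>. F \<sigma> ` N) ` V)"
  proof
    fix w assume "w \<in> (\<lambda>u. gam s (beta_of E u) + lam *\<^sub>R z_of E u) ` N"
    then obtain u where u: "u \<in> N" "w = gam s (beta_of E u) + lam *\<^sub>R z_of E u" by auto
    define \<sigma> :: "real^'p" where "\<sigma> = (\<chi> i. sgn (u $ i))"
    have \<sigma>V: "\<sigma> \<in> V" by (auto simp: V_def \<sigma>_def sgn_if)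
    have sc: "\<And>i. \<sigma> $ i = sgn (u $ i)" unfolding \<sigma>_def by (rule vec_lambda_beta)
    have "z_of E u = (\<chi> i. if i \<in> E then \<sigma> $ i else u $ i)"
      unfolding z_of_def vec_eq_iff by (simp add: sc)
    then have "w = F \<sigma> u" by (simp add: u F_def)
    with \<sigma>V show "w \<in> \<Union> ((\<lambda>\<sigma>. F \<sigma> ` N) ` V)" using u by auto
  qed
  have "negligible (\<Union> ((\<lambda>\<sigma>. F \<sigma> ` N) ` V))"
  proof (rule negligible_Union)
    show "finite ((\<lambda>\<sigma>. F \<sigma> ` N) ` V)" unfolding V_def by (rule finite_imageI[OF finite_sign_vecs])
    show "\<And>T. T \<in> (\<lambda>\<sigma>. F \<sigma> ` N) ` V \<Longrightarrow> negligible T"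
      using negligible_differentiable_image_negligible[OF order_refl negN diff] by auto
  qed
  with sub show ?thesis unfolding N_def by (rule negligible_subset[rotated])
qed



theorem theorem2:
  fixes mu :: "'a measure"
    and f :: "'a \<Rightarrow> real"
    and g :: "real^'p \<Rightarrow> real"
    and lam :: real
    and ell :: "'a \<Rightarrow> real^'p \<Rightarrow> real"
    and gam :: "'a \<Rightarrow> real^'p \<Rightarrow> real^'p"
    and H :: "'a \<Rightarrow> real^'p \<Rightarrow> real^'p \<Rightarrow> real^'p"
    and E :: "'p set"
  assumes mu_sf: "sigma_finite_measure mu"
    and f_meas: "f \<in> borel_measurable mu" and f_nonneg: "\<And>s. f s \<ge> 0"
    and F_prob: "prob_space (density mu f)"
    and g_meas: "g \<in> borel_measurable lborel" and g_nonneg: "\<And>w. g w \<ge> 0"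
    and G_prob: "prob_space (density lborel g)"
    and lam_pos: "lam > 0"
    and ell_convex: "\<And>s. convex_on UNIV (ell s)"
    and ell_grad: "\<And>s b. (ell s has_derivative (\<lambda>h. gam s b \<bullet> h)) (at b)"
    and gam_deriv: "\<And>s b. (gam s has_derivative H s b) (at b)"
    and H_cont: "\<And>s. continuous_on UNIV (\<lambda>b. matrix (H s b))"
    and gam_meas: "(\<lambda>(s, b). gam s b) \<in> borel_measurable (mu \<Otimes>\<^sub>M lborel)"
    and unique_min: "\<And>s w. \<exists>!b. is_minimizer ell lam s w b"
    and bhat_meas: "(\<lambda>(s, w). beta_hat ell lam s w) \<in> borel_measurable (mu \<Otimes>\<^sub>M lborel)"
    and event_pos: "emeasure (density mu f \<Otimes>\<^sub>M density lborel g)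
         {(s, w) \<in> space (mu \<Otimes>\<^sub>M lborel).
            (beta_hat ell lam s w, z_hat ell gam lam s w) \<in> Bset E} > 0"
  shows "\<exists>c>0. cond_law (density mu f \<Otimes>\<^sub>M density lborel g)
           {(s, w) \<in> space (mu \<Otimes>\<^sub>M lborel).
              (beta_hat ell lam s w, z_hat ell gam lam s w) \<in> Bset E}
           (mu \<Otimes>\<^sub>M lborel)
           (\<lambda>(s, w). (s, free_coords E (beta_hat ell lam s w) (z_hat ell gam lam s w)))
         = density (mu \<Otimes>\<^sub>M lborel)
             (\<lambda>(s, u). ennreal (c * f s * g (gam s (beta_of E u) + lam *\<^sub>R z_of E u)
                         * jac_psi H lam E s (beta_of E u)
                         * indicator (Bset E) (beta_of E u, z_of E u)))"
proof -
  let ?M = "mu \<Otimes>\<^sub>M (lborel :: (real^'p) measure)"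
  let ?P = "density mu f \<Otimes>\<^sub>M density lborel g"
  define A where "A = {(s, w) \<in> space (mu \<Otimes>\<^sub>M lborel).
            (beta_hat ell lam s w, z_hat ell gam lam s w) \<in> Bset E}"
  define X where "X = (\<lambda>(s, w). (s, free_coords E (beta_hat ell lam s w) (z_hat ell gam lam s w)))"
  define \<Phi> where "\<Phi> s u = gam s (beta_of E u) + lam *\<^sub>R z_of E u" for s u
  define J where "J s u = jac_psi H lam E s (beta_of E u)" for s u
  have [measurable]: "g \<in> borel_measurable borel" using g_meas by (simp add: measurable_lborel2)
  have [measurable]: "f \<in> borel_measurable mu" by (rule f_meas)
  have bh[measurable]: "(\<lambda>x. beta_hat ell lam (fst x) (snd x)) \<in> borel_measurable ?M"
    using bhat_meas by (simp add: split_beta')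
  have gh: "(\<lambda>x. gam (fst x) (beta_hat ell lam (fst x) (snd x))) \<in> borel_measurable ?M"
    by (rule meas_gam_comp[OF gam_meas bh])
  have zh[measurable]: "(\<lambda>x. z_hat ell gam lam (fst x) (snd x)) \<in> borel_measurable ?M"
    unfolding z_hat_def using gh by measurable
  have Aeq: "A = {x \<in> space ?M. (beta_hat ell lam (fst x) (snd x), z_hat ell gam lam (fst x) (snd x)) \<in> Bset E}"
    unfolding A_def by auto
  have A_sets[measurable]: "A \<in> sets ?M"
    unfolding Aeq using pred_Bset[OF bh zh, of E] by (simp add: pred_def)
  have Xeq: "X = (\<lambda>x. (fst x, free_coords E (beta_hat ell lam (fst x) (snd x)) (z_hat ell gam lam (fst x) (snd x))))"
    unfolding X_def by (simp add: split_beta')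
  have X_meas[measurable]: "X \<in> measurable ?M ?M"
    unfolding Xeq by (intro measurable_Pair) (auto simp: measurable_lborel1)
  have Phi_meas[measurable]: "(\<lambda>x. \<Phi> (fst x) (snd x)) \<in> borel_measurable ?M"
  proof -
    have "(\<lambda>x. beta_of E (snd x)) \<in> borel_measurable ?M" by measurable
    from meas_gam_comp[OF gam_meas this] show ?thesis unfolding \<Phi>_def by measurable
  qed
  have J_meas[measurable]: "(\<lambda>x. J (fst x) (snd x)) \<in> borel_measurable ?M"
    unfolding J_def by (rule meas_jac[OF gam_meas gam_deriv])
  have J_nn: "\<And>s u. 0 \<le> J s u"
    unfolding J_def by (rule jac_nonneg[OF ell_convex ell_grad gam_deriv lam_pos])
  define LF where "LF Y x = f (fst x) * g (snd x) * indicator A x * indicator Y (X x)" for Y x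
  define RF where "RF Y x = f (fst x) * g (\<Phi> (fst x) (snd x)) * J (fst x) (snd x) * indicator (Ucube E) (snd x) * indicator Y x" for Y x
  have Ucube_open: "open (Ucube E)"
  proof -
    have "Ucube E = (\<Inter>i. {u :: real^'p. i \<notin> E \<longrightarrow> \<bar>u $ i\<bar> < 1})" by (auto simp: Ucube_def)
    moreover have "open {u :: real^'p. i \<notin> E \<longrightarrow> \<bar>u $ i\<bar> < 1}" for i
      by (cases "i \<in> E") (auto intro!: open_Collect_less continuous_intros)
    ultimately show ?thesis by (auto intro!: open_INT)
  qed
  define S where "S = {u \<in> Ucube E. \<forall>i\<in>E. u $ i \<noteq> 0}"
  have S_open: "open S"
  proof -
    have "S = Ucube E \<inter> (\<Inter>i\<in>E. {u :: real^'p. u $ i \<noteq> 0})" by (auto simp: S_def)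
    moreover have "open {u :: real^'p. u $ i \<noteq> 0}" for i
      by (auto intro!: open_Collect_neq continuous_intros)
    ultimately show ?thesis using Ucube_open by (auto intro!: open_INT open_Int)
  qed
  have LF_meas[measurable]: "(\<lambda>x. LF Y x) \<in> borel_measurable ?M" if [measurable]: "Y \<in> sets ?M" for Y
    unfolding LF_def by measurable
  have RF_meas[measurable]: "(\<lambda>x. RF Y x) \<in> borel_measurable ?M" if [measurable]: "Y \<in> sets ?M" for Y
  proof -
    have [measurable]: "Ucube E \<in> sets borel" using Ucube_open by simp
    show ?thesis unfolding RF_def by measurable
  qed
  have fiber: "(\<integral>\<^sup>+w. ennreal (LF Y (s, w)) \<partial>lborel) = (\<integral>\<^sup>+u. ennreal (RF Y (s, u)) \<partial>lborel)"
    if s: "s \<in> space mu" and Y[measurable]: "Y \<in> sets ?M" for s Y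
  proof -
    define h where "h w = LF Y (s, w)" for w
    define D where "D u = (\<lambda>v. H s (beta_of E u) (\<chi> i. if i \<in> E then v $ i else 0) + lam *\<^sub>R (\<chi> i. if i \<in> E then 0 else v $ i))" for u
    have bU: "beta_hat ell lam s (\<Phi> s u) = beta_of E u" "z_hat ell gam lam s (\<Phi> s u) = z_of E u"
      if "u \<in> Ucube E" for u
      using bhat_of_U[where s=s and u=u and E=E and ell=ell and gam=gam and lam=lam, OF ell_convex ell_grad lam_pos that unique_min] by (simp_all add: \<Phi>_def)
    have inA: "(s, \<Phi> s u) \<in> A" if "u \<in> Ucube E" for u
      using s bU[OF that] Bset_of_U[of E u] that by (simp add: Aeq space_pair_measure)
    have Xu: "X (s, \<Phi> s u) = (s, u)" if "u \<in> Ucube E" for u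
      using bU[OF that] by (simp add: X_def free_coords_of)
    have hPhi: "h (\<Phi> s u) = f s * g (\<Phi> s u) * indicator Y (s, u)" if "u \<in> Ucube E" for u
      using inA[OF that] Xu[OF that] by (simp add: h_def LF_def)
    have der: "(\<Phi> s has_derivative D u) (at u)" if "u \<in> S" for u
      using Phi_deriv[where s=s and E=E and u=u and lam=lam and gam=gam and H=H, OF gam_deriv] that by (simp add: S_def \<Phi>_def[abs_def] D_def)
    have detD: "det (matrix (D u)) = J s u" for u by (simp add: J_def jac_psi_def D_def)
    have inj: "inj_on (\<Phi> s) S"
    proof (rule inj_onI)
      fix u v assume uv: "u \<in> S" "v \<in> S" "\<Phi> s u = \<Phi> s v"
      have uU: "u \<in> Ucube E" "v \<in> Ucube E" using uv by (auto simp: S_def)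
      have "u = free_coords E (beta_hat ell lam s (\<Phi> s u)) (z_hat ell gam lam s (\<Phi> s u))"
        using bU[OF uU(1)] by (simp add: free_coords_of)
      also have "\<dots> = free_coords E (beta_hat ell lam s (\<Phi> s v)) (z_hat ell gam lam s (\<Phi> s v))"
        using uv(3) by simp
      also have "\<dots> = v" using bU[OF uU(2)] by (simp add: free_coords_of)
      finally show "u = v" .
    qed
    have hm: "h \<in> borel_measurable borel"
      using measurable_Pair2[OF LF_meas[OF Y] s] unfolding h_def[abs_def] by (simp add: measurable_lborel2)
    have hnn: "\<And>w. h w \<ge> 0" by (simp add: h_def LF_def f_nonneg g_nonneg)
    have neg: "negligible {w. h w \<noteq> 0 \<and> w \<notin> \<Phi> s ` S}"
    proof (rule negligible_subset[OF neg_image_bad[where s=s and E=E and lam=lam and gam=gam and H=H, OF gam_deriv]])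
      show "{w. h w \<noteq> 0 \<and> w \<notin> \<Phi> s ` S} \<subseteq> (\<lambda>u. gam s (beta_of E u) + lam *\<^sub>R z_of E u) ` {u. \<exists>i\<in>E. u $ i = 0}"
      proof
        fix w assume w: "w \<in> {w. h w \<noteq> 0 \<and> w \<notin> \<Phi> s ` S}"
        then have "(s, w) \<in> A" by (auto simp: h_def LF_def indicator_def split: if_splits)
        then have B: "(beta_hat ell lam s w, z_hat ell gam lam s w) \<in> Bset E" by (simp add: Aeq)
        define u where "u = free_coords E (beta_hat ell lam s w) (z_hat ell gam lam s w)"
        have uU: "u \<in> Ucube E" using Bset_free[OF B] by (simp add: u_def)
        have wu: "\<Phi> s u = w" using Bset_free[OF B] zhat_eq[OF lam_pos] by (simp add: u_def \<Phi>_def)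
        have "u \<notin> S" using w wu by auto
        then have "\<exists>i\<in>E. u $ i = 0" using uU by (auto simp: S_def)
        then show "w \<in> (\<lambda>u. gam s (beta_of E u) + lam *\<^sub>R z_of E u) ` {u. \<exists>i\<in>E. u $ i = 0}"
          using wu unfolding \<Phi>_def by blast
      qed
    qed
    have g1: "(\<integral>\<^sup>+w. ennreal (g w) \<partial>lborel) = 1"
    proof -
      interpret G: prob_space "density lborel g" by (rule G_prob)
      have "emeasure (density lborel g) (space (density lborel g)) = 1" by (rule G.emeasure_space_1)
      then show ?thesis by (simp add: emeasure_density)
    qed
    have fin: "(\<integral>\<^sup>+w. ennreal (h w) \<partial>lborel) < \<infinity>"
    proof -
      have "(\<integral>\<^sup>+w. ennreal (h w) \<partial>lborel) \<le> (\<integral>\<^sup>+w. ennreal (f s) * ennreal (g w) \<partial>lborel)"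
        by (intro nn_integral_mono)
           (auto simp: h_def LF_def indicator_def ennreal_mult'[symmetric] f_nonneg g_nonneg intro!: ennreal_leI)
      also have "\<dots> = ennreal (f s) * (\<integral>\<^sup>+w. ennreal (g w) \<partial>lborel)"
        by (rule nn_integral_cmult) measurable
      also have "\<dots> = ennreal (f s)" using g1 by simp
      finally show ?thesis using le_less_trans by fastforce
    qed
    have S_sets[measurable]: "S \<in> sets borel" using S_open by simp
    have Gm: "(\<lambda>u. ennreal (\<bar>det (matrix (D u))\<bar> * h (\<Phi> s u)) * indicator S u) \<in> borel_measurable borel"
    proof -
      have eq: "(\<lambda>u. ennreal (\<bar>det (matrix (D u))\<bar> * h (\<Phi> s u)) * indicator S u)
          = (\<lambda>u. ennreal (J s u * (f s * g (\<Phi> s u) * indicator Y (s, u))) * indicator S u)"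
      proof
        fix u show "ennreal (\<bar>det (matrix (D u))\<bar> * h (\<Phi> s u)) * indicator S u
          = ennreal (J s u * (f s * g (\<Phi> s u) * indicator Y (s, u))) * indicator S u"
          by (cases "u \<in> S") (auto simp: detD J_nn hPhi S_def)
      qed
      have m: "(\<lambda>x. ennreal (J (fst x) (snd x) * (f (fst x) * g (\<Phi> (fst x) (snd x)) * indicator Y x)) * indicator S (snd x))
          \<in> borel_measurable ?M" by measurable
      from measurable_Pair2[OF m s] show ?thesis by (simp add: eq measurable_lborel2)
    qed
    have "(\<integral>\<^sup>+w. ennreal (h w) \<partial>lborel)
        = (\<integral>\<^sup>+u. ennreal (\<bar>det (matrix (D u))\<bar> * h (\<Phi> s u)) * indicator S u \<partial>lborel)"
      by (rule cov_nn[OF S_open der inj hm hnn neg fin Gm])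
    also have "\<dots> = (\<integral>\<^sup>+u. ennreal (RF Y (s, u)) \<partial>lborel)"
    proof (rule nn_integral_cong_AE)
      have N: "{u :: real^'p. \<exists>i\<in>E. u $ i = 0} \<in> null_sets lborel"
      proof -
        have "{u :: real^'p. \<exists>i\<in>E. u $ i = 0} = \<Union> ((\<lambda>i. {u :: real^'p. u $ i = 0}) ` E)" by auto
        moreover have "negligible (\<Union> ((\<lambda>i. {u :: real^'p. u $ i = 0}) ` E))"
          by (intro negligible_Union finite_imageI) (auto intro: negligible_standard_hyperplane_cart)
        ultimately have nl: "negligible {u :: real^'p. \<exists>i\<in>E. u $ i = 0}" by simp
        have sb: "{u :: real^'p. \<exists>i\<in>E. u $ i = 0} \<in> sets borel" by measurable
        from nl have "{u :: real^'p. \<exists>i\<in>E. u $ i = 0} \<in> null_sets lebesgue"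
          by (simp add: negligible_iff_null_sets)
        moreover have sb': "{u :: real^'p. \<exists>i\<in>E. u $ i = 0} \<in> sets lborel" using sb by simp
        ultimately show ?thesis using null_sets_completion_iff[OF sb'] by blast
      qed
      from AE_not_in[OF N]
      show "AE u in lborel. ennreal (\<bar>det (matrix (D u))\<bar> * h (\<Phi> s u)) * indicator S u = ennreal (RF Y (s, u))"
      proof eventually_elim
        fix u assume u: "u \<notin> {u :: real^'p. \<exists>i\<in>E. u $ i = 0}"
        show "ennreal (\<bar>det (matrix (D u))\<bar> * h (\<Phi> s u)) * indicator S u = ennreal (RF Y (s, u))"
        proof (cases "u \<in> Ucube E")
          case True
          then have "u \<in> S" using u by (auto simp: S_def)
          then show ?thesis using True by (simp add: detD J_nn hPhi RF_def mult_ac)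
        next
          case False
          then have "u \<notin> S" by (auto simp: S_def)
          then show ?thesis using False by (simp add: RF_def)
        qed
      qed
    qed
    finally show ?thesis by (simp add: h_def)
  qed
  have Fub: "(\<integral>\<^sup>+x. ennreal (LF Y x) \<partial>?M) = (\<integral>\<^sup>+x. ennreal (RF Y x) \<partial>?M)"
    if Y[measurable]: "Y \<in> sets ?M" for Y
  proof -
    have "(\<integral>\<^sup>+x. ennreal (LF Y x) \<partial>?M) = (\<integral>\<^sup>+s. \<integral>\<^sup>+w. ennreal (LF Y (s, w)) \<partial>lborel \<partial>mu)"
      by (rule lborel.nn_integral_fst[symmetric]) measurable
    also have "\<dots> = (\<integral>\<^sup>+s. \<integral>\<^sup>+u. ennreal (RF Y (s, u)) \<partial>lborel \<partial>mu)"
      by (rule nn_integral_cong) (rule fiber[OF _ Y])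
    also have "\<dots> = (\<integral>\<^sup>+x. ennreal (RF Y x) \<partial>?M)"
      by (rule lborel.nn_integral_fst) measurable
    finally show ?thesis .
  qed
  have Pprob: "prob_space ?P" by (rule prob_space_pair[OF F_prob G_prob])
  have sigG: "sigma_finite_measure (density lborel g)" by (rule prob_space_imp_sigma_finite[OF G_prob])
  have P_dens: "?P = density ?M (\<lambda>(x, y). ennreal (f x) * ennreal (g y))"
    by (rule pair_measure_density) (auto intro: sigG lborel.sigma_finite_measure_axioms)
  have sets_P: "sets ?P = sets ?M" by (simp add: P_dens)
  have space_P: "space ?P = space ?M" by (simp add: P_dens)
  define pA where "pA = measure ?P A"
  have emA: "emeasure ?P A = ennreal pA"
  proof -
    interpret P: prob_space ?P by (rule Pprob)
    show ?thesis unfolding pA_def by (rule P.emeasure_eq_measure)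
  qed
  have "emeasure ?P A > 0" using event_pos by (simp add: A_def)
  then have pA_pos: "pA > 0" using emA by simp
  define c where "c = 1 / pA"
  have c_pos: "c > 0" using pA_pos by (simp add: c_def)
  have main: "cond_law ?P A ?M X
      = density ?M (\<lambda>(s, u). ennreal (c * f s * g (gam s (beta_of E u) + lam *\<^sub>R z_of E u)
                         * jac_psi H lam E s (beta_of E u)
                         * indicator (Bset E) (beta_of E u, z_of E u)))"
    (is "_ = density ?M ?\<rho>")
    unfolding cond_law_def
  proof (rule measure_eqI)
    show "sets (distr (density ?P (\<lambda>x. indicator A x / emeasure ?P A)) ?M X) = sets (density ?M ?\<rho>)"
      by simp
    fix Y assume "Y \<in> sets (distr (density ?P (\<lambda>x. indicator A x / emeasure ?P A)) ?M X)"
    then have Y[measurable]: "Y \<in> sets ?M" by simp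
    have Xm: "X \<in> measurable (density ?P (\<lambda>x. indicator A x / emeasure ?P A)) ?M"
      using X_meas by (simp add: measurable_cong_sets[OF sets_P[THEN trans[OF sets_density]] refl])
    have "emeasure (distr (density ?P (\<lambda>x. indicator A x / emeasure ?P A)) ?M X) Y
        = emeasure (density ?P (\<lambda>x. indicator A x / emeasure ?P A)) (X -` Y \<inter> space ?M)"
      by (subst emeasure_distr[OF Xm Y]) (simp add: space_P)
    also have "\<dots> = (\<integral>\<^sup>+x. (indicator A x / emeasure ?P A) * indicator (X -` Y \<inter> space ?M) x \<partial>?P)"
    proof (rule emeasure_density)
      show "X -` Y \<inter> space ?M \<in> sets ?P" using measurable_sets[OF X_meas Y] sets_P by simp
    qed (auto simp: sets_P)
    also have "\<dots> = (\<integral>\<^sup>+x. (case x of (x, y) \<Rightarrow> ennreal (f x) * ennreal (g y)) *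
             ((indicator A x / emeasure ?P A) * indicator (X -` Y \<inter> space ?M) x) \<partial>?M)"
      by (subst P_dens, subst nn_integral_density) auto
    also have "\<dots> = (\<integral>\<^sup>+x. ennreal (c * LF Y x) \<partial>?M)"
    proof (rule nn_integral_cong)
      fix x assume x: "x \<in> space ?M"
      obtain s w where xsw: "x = (s, w)" by (cases x)
      have inv: "1 / ennreal pA = ennreal (1 / pA)" using divide_ennreal[of 1 pA] pA_pos by simp
      have fg: "0 \<le> f s * g w" using f_nonneg[of s] g_nonneg[of w] by simp
      show "(case x of (x, y) \<Rightarrow> ennreal (f x) * ennreal (g y)) *
             ((indicator A x / emeasure ?P A) * indicator (X -` Y \<inter> space ?M) x) = ennreal (c * LF Y x)"
        using x pA_pos f_nonneg[of s] g_nonneg[of w]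
        by (auto simp: xsw LF_def emA c_def indicator_def inv ennreal_mult'[symmetric] fg)
    qed
    also have "\<dots> = ennreal c * (\<integral>\<^sup>+x. ennreal (LF Y x) \<partial>?M)"
      using c_pos by (simp add: ennreal_mult nn_integral_cmult LF_def f_nonneg g_nonneg)
    also have "\<dots> = ennreal c * (\<integral>\<^sup>+x. ennreal (RF Y x) \<partial>?M)" by (simp add: Fub[OF Y])
    also have "\<dots> = (\<integral>\<^sup>+x. ennreal c * ennreal (RF Y x) \<partial>?M)"
      by (rule nn_integral_cmult[symmetric]) (use RF_meas[OF Y] in measurable)
    also have "\<dots> = (\<integral>\<^sup>+x. ennreal (c * RF Y x) \<partial>?M)"
    proof (rule nn_integral_cong)
      fix x
      have "0 \<le> RF Y x" by (simp add: RF_def f_nonneg g_nonneg J_nn)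
      then show "ennreal c * ennreal (RF Y x) = ennreal (c * RF Y x)" using c_pos by (simp add: ennreal_mult)
    qed
    also have "\<dots> = (\<integral>\<^sup>+x. ?\<rho> x * indicator Y x \<partial>?M)"
    proof (rule nn_integral_cong)
      fix x assume x: "x \<in> space ?M"
      obtain s u where xsu: "x = (s, u)" by (cases x)
      show "ennreal (c * RF Y x) = ?\<rho> x * indicator Y x"
        by (auto simp: xsu RF_def Bset_of_U \<Phi>_def J_def indicator_def mult_ac)
    qed
    also have "\<dots> = emeasure (density ?M ?\<rho>) Y"
    proof (rule emeasure_density[symmetric, OF _ Y])
      have eqr: "?\<rho> = (\<lambda>x. ennreal (c * f (fst x) * g (\<Phi> (fst x) (snd x)) * J (fst x) (snd x) * indicator (Ucube E) (snd x)))"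
        by (auto simp: fun_eq_iff Bset_of_U \<Phi>_def J_def indicator_def)
      have [measurable]: "Ucube E \<in> sets borel" using Ucube_open by simp
      show "?\<rho> \<in> borel_measurable ?M" unfolding eqr by measurable
    qed
    finally show "emeasure (distr (density ?P (\<lambda>x. indicator A x / emeasure ?P A)) ?M X) Y
        = emeasure (density ?M ?\<rho>) Y" .
  qed
  show ?thesis using main c_pos unfolding A_def X_def by blast
qed

end
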